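(* Let $M$ be a real $4$-dimensional manifold with local coordinates $q^1,\dots,q^4$, and write $\phi_{\mu\nu}=\partial_{q^\mu}\partial_{q^\nu}\phi$. None of the following Monge–Ampère equations for a real function $\phi$ corresponds to the variational problem of a first-order Lagrangian function $L(q^\mu,\phi,\phi_\mu)$ (i.e. none of them is, up to multiplication by a non-vanishing function, the Euler–Lagrange equation of such an $L$): (1) first Plebański heavenly equation $\phi_{13}\phi_{24}-\phi_{14}\phi_{23}=1$; (2) second Plebański heavenly equation $\phi_{11}\phi_{22}-(\phi_{12})^2+\phi_{13}+\phi_{24}=0$; (3) Grant equation $\phi_{11}+\phi_{24}\phi_{13}-\phi_{23}\phi_{14}=0$; (4) Husain equation $\phi_{13}\phi_{24}-\phi_{14}\phi_{23}+\phi_{11}+\phi_{22}=0$.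
   Context: A first-order Lagrangian function is a smooth function $L(q^\mu,\phi,\phi_\mu)$ of the coordinates, the field and its first derivatives $\phi_\mu=\partial_{q^\mu}\phi$; its Euler–Lagrange equation is $\frac{\partial L}{\partial\phi}-\frac{\partial}{\partial q^\mu}\frac{\partial L}{\partial\phi_\mu}=0$. *)

theory Defs
  imports "HOL-Analysis.Analysis"
begin

definition dd :: "'a::real_normed_vector \<Rightarrow> ('a \<Rightarrow> real) \<Rightarrow> 'a \<Rightarrow> real" where
  "dd v f x = deriv (\<lambda>t. f (x + t *\<^sub>R v)) 0"

definition smooth_on :: "'a::euclidean_space set \<Rightarrow> ('a \<Rightarrow> real) \<Rightarrow> bool" where
  "smooth_on S f \<longleftrightarrow>
     (\<forall>vs. set vs \<subseteq> Basis \<longrightarrow>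
        continuous_on S (foldr dd vs f) \<and>
        (\<forall>x\<in>S. \<forall>v\<in>Basis. (\<lambda>t. foldr dd vs f (x + t *\<^sub>R v)) differentiable (at 0)))"

text \<open>Coordinates q^1..q^4 are the indices 1,2,3,4 of the numeral type 4
  (four distinct elements).  Partial derivative in q^i.\<close>
definition pd :: "4 \<Rightarrow> (real^4 \<Rightarrow> real) \<Rightarrow> real^4 \<Rightarrow> real" where
  "pd i f q = dd (axis i 1) f q"

definition grad :: "(real^4 \<Rightarrow> real) \<Rightarrow> real^4 \<Rightarrow> real^4" where
  "grad \<phi> q = (\<chi> i. pd i \<phi> q)"

definition hess :: "(real^4 \<Rightarrow> real) \<Rightarrow> real^4 \<Rightarrow> real^4^4" where
  "hess \<phi> q = (\<chi> i j. pd i (pd j \<phi>) q)"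

definition EL :: "((real^4) \<times> real \<times> (real^4) \<Rightarrow> real) \<Rightarrow> (real^4 \<Rightarrow> real) \<Rightarrow> real^4 \<Rightarrow> real" where
  "EL L \<phi> q =
     dd (0, 1, 0) L (q, \<phi> q, grad \<phi> q)
     - (\<Sum>\<mu>\<in>UNIV. pd \<mu> (\<lambda>x. dd (0, 0, axis \<mu> 1) L (x, \<phi> x, grad \<phi> x)) q)"

definition first_order_variational ::
  "(real^4) set \<Rightarrow> ((real^4) \<times> real \<times> (real^4) \<times> (real^4^4) \<Rightarrow> real) \<Rightarrow> bool" where
  "first_order_variational U E \<longleftrightarrow>
     (\<exists>L f. smooth_on (U \<times> UNIV) L \<and>
            smooth_on (U \<times> UNIV) f \<and>
            (\<forall>z\<in>U \<times> UNIV. f z \<noteq> 0) \<and>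
            (\<forall>\<phi>. smooth_on U \<phi> \<longrightarrow>
               (\<forall>q\<in>U. EL L \<phi> q =
                   f (q, \<phi> q, grad \<phi> q, hess \<phi> q) * E (q, \<phi> q, grad \<phi> q, hess \<phi> q))))"

definition heavenly1 :: "(real^4) \<times> real \<times> (real^4) \<times> (real^4^4) \<Rightarrow> real" where
  "heavenly1 z = (case z of (q, u, p, H) \<Rightarrow>
     H$1$3 * H$2$4 - H$1$4 * H$2$3 - 1)"

definition heavenly2 :: "(real^4) \<times> real \<times> (real^4) \<times> (real^4^4) \<Rightarrow> real" where
  "heavenly2 z = (case z of (q, u, p, H) \<Rightarrow>
     H$1$1 * H$2$2 - (H$1$2)^2 + H$1$3 + H$2$4)"

definition grant_eq :: "(real^4) \<times> real \<times> (real^4) \<times> (real^4^4) \<Rightarrow> real" where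
  "grant_eq z = (case z of (q, u, p, H) \<Rightarrow>
     H$1$1 + H$2$4 * H$1$3 - H$2$3 * H$1$4)"

definition husain_eq :: "(real^4) \<times> real \<times> (real^4) \<times> (real^4^4) \<Rightarrow> real" where
  "husain_eq z = (case z of (q, u, p, H) \<Rightarrow>
     H$1$3 * H$2$4 - H$1$4 * H$2$3 + H$1$1 + H$2$2)"

end

theory Submission
  imports Defs
begin


lemma core_dir:
  fixes g :: "'a::real_normed_vector \<Rightarrow> real"
  assumes S: "open S" "a \<in> S"
    and dv: "((\<lambda>t. g (a + t *\<^sub>R v)) has_real_derivative D) (at 0)"
    and dw: "\<And>x. x \<in> S \<Longrightarrow> ((\<lambda>s. g (x + s *\<^sub>R w)) has_real_derivative Dw x) (at 0)"
    and cw: "continuous_on S Dw"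
  shows "((\<lambda>t. g (a + t *\<^sub>R (v + w))) has_real_derivative (D + Dw a)) (at 0)"
proof -
  define F where "F t = g (a + t *\<^sub>R v + t *\<^sub>R w) - g (a + t *\<^sub>R v)" for t
  have F0: "F 0 = 0" by (simp add: F_def)
  have "((\<lambda>t. F t / t) \<longlongrightarrow> Dw a) (at 0)"
    unfolding LIM_eq
  proof (intro allI impI)
    fix r :: real assume r: "r > 0"
    obtain d where d: "d > 0" "\<And>y. y \<in> S \<Longrightarrow> dist y a < d \<Longrightarrow> dist (Dw y) (Dw a) < r"
      using cw S(2) r unfolding continuous_on_iff by metis
    obtain e where e: "e > 0" "ball a e \<subseteq> S" using S open_contains_ball by blast
    define d0 where "d0 = min d e"
    have d0: "d0 > 0" using d e by (simp add: d0_def)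
    define s where "s = d0 / (norm v + norm w + 1)"
    have s: "s > 0" using d0 by (simp add: s_def add_nonneg_pos)
    show "\<exists>s>0. \<forall>x. x \<noteq> 0 \<and> norm (x - 0) < s \<longrightarrow> norm (F x / x - Dw a) < r"
    proof (intro exI[of _ s] conjI allI impI s)
      fix t :: real assume t: "t \<noteq> 0 \<and> norm (t - 0) < s"
      have pt: "a + t *\<^sub>R v + \<xi> *\<^sub>R w \<in> S \<and> dist (Dw (a + t *\<^sub>R v + \<xi> *\<^sub>R w)) (Dw a) < r"
        if "\<bar>\<xi>\<bar> \<le> \<bar>t\<bar>" for \<xi>
      proof -
        have "norm (t *\<^sub>R v + \<xi> *\<^sub>R w) \<le> \<bar>t\<bar> * norm v + \<bar>t\<bar> * norm w"
          using norm_triangle_ineq[of "t *\<^sub>R v" "\<xi> *\<^sub>R w"] that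
          by (simp add: mult_right_mono order_trans)
        also have "\<dots> \<le> \<bar>t\<bar> * (norm v + norm w + 1)" by (simp add: algebra_simps)
        also have "\<dots> < s * (norm v + norm w + 1)"
          using t by (intro mult_strict_right_mono) (auto simp: add_nonneg_pos)
        also have "\<dots> = d0" unfolding s_def
          proof -
          have "norm v + norm w + 1 > 0" using norm_ge_zero[of v] norm_ge_zero[of w] by linarith
          then show "d0 / (norm v + norm w + 1) * (norm v + norm w + 1) = d0" by simp
        qed
        finally have n: "norm (t *\<^sub>R v + \<xi> *\<^sub>R w) < d0" .
        have dd: "dist (a + t *\<^sub>R v + \<xi> *\<^sub>R w) a < d0"
          using n by (simp add: dist_norm add.assoc)
        then have "a + t *\<^sub>R v + \<xi> *\<^sub>R w \<in> S" using e unfolding d0_def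
          by (auto simp: dist_commute)
        moreover have "dist (Dw (a + t *\<^sub>R v + \<xi> *\<^sub>R w)) (Dw a) < r"
          using d(2) dd calculation unfolding d0_def by auto
        ultimately show ?thesis by blast
      qed
      define h where "h \<xi> = g (a + t *\<^sub>R v + \<xi> *\<^sub>R w)" for \<xi>
      have hd: "(h has_real_derivative Dw (a + t *\<^sub>R v + \<xi> *\<^sub>R w)) (at \<xi>)"
        if "\<bar>\<xi>\<bar> \<le> \<bar>t\<bar>" for \<xi>
      proof -
        have "((\<lambda>s. g ((a + t *\<^sub>R v + \<xi> *\<^sub>R w) + s *\<^sub>R w)) has_real_derivative
               Dw (a + t *\<^sub>R v + \<xi> *\<^sub>R w)) (at 0)"
          using dw pt[OF that] by blast
        then have "((\<lambda>s. h (s + \<xi>)) has_real_derivative Dw (a + t *\<^sub>R v + \<xi> *\<^sub>R w)) (at 0)"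
          unfolding h_def by (simp add: scaleR_add_left algebra_simps)
        then show ?thesis using DERIV_shift[of h _ 0 \<xi>] by simp
      qed
      obtain z where z: "\<bar>z\<bar> \<le> \<bar>t\<bar>" "h t - h 0 = t * Dw (a + t *\<^sub>R v + z *\<^sub>R w)"
      proof (cases "t > 0")
        case True
        from MVT2[of 0 t h "\<lambda>\<xi>. Dw (a + t *\<^sub>R v + \<xi> *\<^sub>R w)"] True hd
        obtain z where "0 < z" "z < t" "h t - h 0 = (t - 0) * Dw (a + t *\<^sub>R v + z *\<^sub>R w)" by auto
        then show ?thesis using that[of z] by auto
      next
        case False
        then have tn: "t < 0" using t by auto
        from MVT2[of t 0 h "\<lambda>\<xi>. Dw (a + t *\<^sub>R v + \<xi> *\<^sub>R w)"] tn hd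
        obtain z where "t < z" "z < 0" "h 0 - h t = (0 - t) * Dw (a + t *\<^sub>R v + z *\<^sub>R w)" by auto
        then show ?thesis using that[of z] by (auto simp: algebra_simps)
      qed
      have "F t = h t - h 0" by (simp add: F_def h_def)
      then have "F t / t = Dw (a + t *\<^sub>R v + z *\<^sub>R w)" using z t by simp
      then show "norm (F t / t - Dw a) < r" using pt[OF z(1)] by (simp add: dist_norm)
    qed
  qed
  then have "(F has_real_derivative Dw a) (at 0)"
    unfolding has_field_derivative_iff using F0 by simp
  from DERIV_add[OF this dv]
  show ?thesis by (simp add: F_def scaleR_add_right add_ac)
qed


lemma dir_sum:
  fixes g :: "'a::real_normed_vector \<Rightarrow> real" and w :: "'i \<Rightarrow> 'a"
  assumes S: "open S" "a \<in> S" and I: "finite I"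
    and dv: "((\<lambda>t. g (a + t *\<^sub>R v)) has_real_derivative D) (at 0)"
    and dw: "\<And>i x. i \<in> I \<Longrightarrow> x \<in> S \<Longrightarrow> ((\<lambda>s. g (x + s *\<^sub>R w i)) has_real_derivative Dw i x) (at 0)"
    and cw: "\<And>i. i \<in> I \<Longrightarrow> continuous_on S (Dw i)"
  shows "((\<lambda>t. g (a + t *\<^sub>R (v + (\<Sum>i\<in>I. c i *\<^sub>R w i)))) has_real_derivative
            (D + (\<Sum>i\<in>I. c i * Dw i a))) (at 0)"
  using I dw cw
proof (induction I rule: finite_induct)
  case empty
  then show ?case using dv by simp
next
  case (insert j I)
  have IH: "((\<lambda>t. g (a + t *\<^sub>R (v + (\<Sum>i\<in>I. c i *\<^sub>R w i)))) has_real_derivative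
            (D + (\<Sum>i\<in>I. c i * Dw i a))) (at 0)"
    using insert by auto
  have dj: "((\<lambda>s. g (x + s *\<^sub>R (c j *\<^sub>R w j))) has_real_derivative c j * Dw j x) (at 0)"
    if "x \<in> S" for x
  proof -
    have "((\<lambda>s. g (x + s *\<^sub>R w j)) has_real_derivative Dw j x) (at (c j * 0))"
      using insert.prems(1)[of j x] that by simp
    moreover have "((\<lambda>s. c j * s) has_real_derivative c j) (at 0)"
      by (auto intro!: derivative_eq_intros)
    ultimately have "((\<lambda>s. g (x + (c j * s) *\<^sub>R w j)) has_real_derivative Dw j x * c j) (at 0)"
      by (rule DERIV_chain2)
    then show ?thesis by (simp add: mult.commute)
  qed
  have cj: "continuous_on S (\<lambda>x. c j * Dw j x)"
    using insert.prems(2)[of j] by (auto intro!: continuous_intros)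
  from core_dir[OF S IH dj cj]
  show ?case using insert.hyps by (simp add: add_ac)
qed



definition Qf :: "real \<Rightarrow> real^4 \<Rightarrow> real^4^4 \<Rightarrow> real^4 \<Rightarrow> real^4 \<Rightarrow> real" where
  "Qf c b M a x = c + (\<Sum>i\<in>UNIV. b$i * (x$i - a$i))
      + (\<Sum>i\<in>UNIV. \<Sum>j\<in>UNIV. M$i$j * (x$i - a$i) * (x$j - a$j))"

definition Qd :: "real^4 \<Rightarrow> real^4^4 \<Rightarrow> real^4 \<Rightarrow> real^4" where
  "Qd b M v = (\<chi> k. \<Sum>j\<in>UNIV. (M$j$k + M$k$j) * v$j)"

lemma Qf_deriv:
  "((\<lambda>t. Qf c b M a (x + t *\<^sub>R v)) has_real_derivative
     Qf (\<Sum>i\<in>UNIV. b$i * v$i) (Qd b M v) 0 a x) (at 0)"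
proof -
  have "((\<lambda>t. Qf c b M a (x + t *\<^sub>R v)) has_real_derivative
     (\<Sum>i\<in>UNIV. b$i * v$i) + (\<Sum>i\<in>UNIV. \<Sum>j\<in>UNIV. M$i$j * (v$i * (x$j - a$j) + (x$i - a$i) * v$j))) (at 0)"
    unfolding Qf_def
    by (auto intro!: derivative_eq_intros simp: algebra_simps)
  moreover have "(\<Sum>i\<in>UNIV. \<Sum>j\<in>UNIV. M$i$j * (v$i * (x$j - a$j) + (x$i - a$i) * v$j))
      = (\<Sum>k\<in>UNIV. (Qd b M v)$k * (x$k - a$k))"
  proof -
    have "(\<Sum>i\<in>UNIV. \<Sum>j\<in>UNIV. M$i$j * (v$i * (x$j - a$j) + (x$i - a$i) * v$j))
       = (\<Sum>i\<in>UNIV. \<Sum>j\<in>UNIV. M$i$j * v$i * (x$j - a$j)) + (\<Sum>i\<in>UNIV. \<Sum>j\<in>UNIV. M$i$j * (x$i - a$i) * v$j)"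
      by (simp add: distrib_left sum.distrib mult.assoc)
    also have "(\<Sum>i\<in>UNIV. \<Sum>j\<in>UNIV. M$i$j * v$i * (x$j - a$j)) = (\<Sum>k\<in>UNIV. (\<Sum>j\<in>UNIV. M$j$k * v$j) * (x$k - a$k))"
      by (subst sum.swap) (simp add: sum_distrib_right)
    also have "(\<Sum>i\<in>UNIV. \<Sum>j\<in>UNIV. M$i$j * (x$i - a$i) * v$j) = (\<Sum>k\<in>UNIV. (\<Sum>j\<in>UNIV. M$k$j * v$j) * (x$k - a$k))"
      by (simp add: sum_distrib_left sum_distrib_right mult_ac)
    finally show ?thesis by (simp add: Qd_def distrib_right sum.distrib)
  qed
  ultimately show ?thesis by (simp add: Qf_def)
qed

lemma dd_Qf: "dd v (Qf c b M a) = Qf (\<Sum>i\<in>UNIV. b$i * v$i) (Qd b M v) 0 a"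
  by (rule ext) (simp add: dd_def DERIV_imp_deriv[OF Qf_deriv])

lemma foldr_dd_Qf: "\<exists>c' b' M'. foldr dd vs (Qf c b M a) = Qf c' b' M' a"
proof (induction vs)
  case Nil then show ?case by auto
next
  case (Cons v vs)
  then obtain c' b' M' where "foldr dd vs (Qf c b M a) = Qf c' b' M' a" by blast
  then show ?case by (simp add: dd_Qf) blast
qed

lemma Qf_cont: "continuous_on S (Qf c b M a)"
  unfolding Qf_def by (intro continuous_intros)

lemma smooth_Qf: "smooth_on S (Qf c b M a)"
  unfolding smooth_on_def
proof (intro allI impI conjI ballI)
  fix vs :: "(real^4) list"
  obtain c' b' M' where e: "foldr dd vs (Qf c b M a) = Qf c' b' M' a" using foldr_dd_Qf by blast
  show "continuous_on S (foldr dd vs (Qf c b M a))" unfolding e by (rule Qf_cont)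
  fix x v
  show "(\<lambda>t. foldr dd vs (Qf c b M a) (x + t *\<^sub>R v)) differentiable at 0"
    unfolding e using Qf_deriv real_differentiable_def by blast
qed



definition halfM :: "real^4^4 \<Rightarrow> real^4^4" where
  "halfM H = (\<chi> i j. H$i$j / 2)"

definition phiH :: "real^4 \<Rightarrow> real^4^4 \<Rightarrow> real^4 \<Rightarrow> real" where
  "phiH a H = Qf 0 0 (halfM H) a"

definition symz :: "real^4^4 \<Rightarrow> bool" where
  "symz H \<longleftrightarrow> (\<forall>i j. H$i$j = H$j$i) \<and> (\<forall>i. H$i$i = 0)"

lemma axis_comp: "axis i (1::real) $ j = (if j = i then 1 else 0)"
  by (simp add: axis_def)

lemma mult_ifz: "x * (if P then y else 0) = (if P then x * y else (0::real))"
  "(if P then y else 0) * x = (if P then y * x else (0::real))"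
  "(if P then y else 0) / z = (if P then y / z else (0::real))"
  by auto

lemma line_comp: "(a + t *\<^sub>R axis m 1) $ i - a $ i = (if i = m then t else (0::real))"
  by (simp add: axis_comp)

lemma pd_phiH: "pd i (phiH a H) = Qf 0 (Qd 0 (halfM H) (axis i 1)) 0 a"
  unfolding pd_def[abs_def] phiH_def dd_Qf by simp

lemma pd_phiH_val: "pd i (phiH a H) q = (\<Sum>k\<in>UNIV. (H$i$k/2 + H$k$i/2) * (q$k - a$k))"
  by (simp add: pd_phiH Qf_def Qd_def axis_comp halfM_def add_divide_distrib if_distrib cong: if_cong)

lemma phiH_a: "phiH a H a = 0"
  by (simp add: phiH_def Qf_def)

lemma grad_phiH_a: "grad (phiH a H) a = 0"
  by (simp add: grad_def pd_phiH_val vec_eq_iff)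

lemma hess_phiH: assumes "symz H" shows "hess (phiH a H) q = H"
proof -
  have "pd i (pd j (phiH a H)) q = H$i$j" for i j
    using assms unfolding pd_phiH
    by (simp add: pd_def dd_Qf Qf_def Qd_def axis_comp halfM_def symz_def mult_ifz)
  then show ?thesis by (simp add: hess_def vec_eq_iff)
qed

lemma phiH_line: assumes "symz H" shows "phiH a H (a + t *\<^sub>R axis m 1) = 0"
  using assms by (simp add: phiH_def Qf_def line_comp axis_comp halfM_def symz_def mult_ifz)

lemma grad_phiH_line: assumes "symz H"
  shows "grad (phiH a H) (a + t *\<^sub>R axis m 1) = (\<chi> i. t * H$i$m)"
  using assms by (simp add: grad_def pd_phiH_val vec_eq_iff line_comp axis_comp symz_def mult_ifz)


definition Bc :: "((real^4) \<times> real \<times> (real^4) \<Rightarrow> real) \<Rightarrow> real^4 \<Rightarrow> 4 \<Rightarrow> real" where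
  "Bc L a m = dd (axis m 1, 0, 0) (dd (0, 0, axis m 1) L) (a, 0, 0)"
definition Cc :: "((real^4) \<times> real \<times> (real^4) \<Rightarrow> real) \<Rightarrow> real^4 \<Rightarrow> 4 \<Rightarrow> 4 \<Rightarrow> real" where
  "Cc L a m s = dd (0, 0, axis s 1) (dd (0, 0, axis m 1) L) (a, 0, 0)"

lemma line_eq:
  fixes a :: "real^4" and H :: "real^4^4"
  shows "((a, 0, 0)::(real^4) \<times> real \<times> (real^4)) + t *\<^sub>R ((axis m 1, 0, 0) + (\<Sum>s\<in>UNIV. H$s$m *\<^sub>R (0, 0, axis s 1)))
     = (a + t *\<^sub>R axis m 1, 0, \<chi> i. t * H$i$m)"
  by (simp add: prod_eq_iff fst_sum snd_sum vec_eq_iff sum_component axis_comp if_distrib cong: if_cong)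

lemma pd_line:
  assumes U: "open U" "a \<in> U" and L: "smooth_on (U \<times> UNIV) L" and H: "symz H"
  shows "pd m (\<lambda>x. dd (0, 0, axis m 1) L (x, phiH a H x, grad (phiH a H) x)) a
         = Bc L a m + (\<Sum>s\<in>UNIV. H$s$m * Cc L a m s)"
proof -
  let ?S = "U \<times> (UNIV :: (real \<times> (real^4)) set)"
  let ?g = "dd (0, 0, axis m 1) L"
  let ?z = "((a, 0, 0)::(real^4) \<times> real \<times> (real^4))"
  have S: "open ?S" "?z \<in> ?S" using U by (auto intro: open_Times)
  have bm: "((0, 0, axis m 1)::(real^4) \<times> real \<times> (real^4)) \<in> Basis"
    by (simp add: Basis_prod_def zero_prod_def)
  have "set [((0, 0, axis m 1)::(real^4) \<times> real \<times> (real^4))] \<subseteq> Basis" using bm by simp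
  from L[unfolded smooth_on_def, rule_format, OF this]
  have sm1: "continuous_on ?S ?g \<and> (\<forall>x\<in>?S. \<forall>v\<in>Basis. (\<lambda>t. ?g (x + t *\<^sub>R v)) differentiable (at 0))"
    by simp
  have dif: "((\<lambda>t. ?g (x + t *\<^sub>R v)) has_real_derivative dd v ?g x) (at 0)"
    if "x \<in> ?S" "v \<in> Basis" for x v
  proof -
    have "(\<lambda>t. ?g (x + t *\<^sub>R v)) differentiable (at 0)" using sm1 that by blast
    then show ?thesis unfolding dd_def[of v ?g x] by (simp only: DERIV_deriv_iff_real_differentiable)
  qed
  have cont: "continuous_on ?S (dd (0, 0, axis s 1) ?g)" for s
  proof -
    have "set [(0, 0, axis s 1), (0, 0, axis m 1)] \<subseteq> (Basis :: ((real^4) \<times> real \<times> (real^4)) set)"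
      by (simp add: Basis_prod_def zero_prod_def)
    from L[unfolded smooth_on_def, rule_format, OF this] show ?thesis by simp
  qed
  have v: "((axis m 1, 0, 0)::(real^4) \<times> real \<times> (real^4)) \<in> Basis"
    by (simp add: Basis_prod_def zero_prod_def)
  have ws: "((0, 0, axis s 1)::(real^4) \<times> real \<times> (real^4)) \<in> Basis" for s
    by (simp add: Basis_prod_def zero_prod_def)
  have main: "((\<lambda>t. ?g (?z + t *\<^sub>R ((axis m 1, 0, 0) + (\<Sum>s\<in>UNIV. H$s$m *\<^sub>R (0, 0, axis s 1)))))
      has_real_derivative (dd (axis m 1, 0, 0) ?g ?z + (\<Sum>s\<in>UNIV. H$s$m * dd (0, 0, axis s 1) ?g ?z))) (at 0)"
    by (rule dir_sum[OF S finite_class.finite_UNIV dif[OF S(2) v]]; blast intro: dif ws cont)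
  have "(\<lambda>t. ?g (a + t *\<^sub>R axis m 1, phiH a H (a + t *\<^sub>R axis m 1), grad (phiH a H) (a + t *\<^sub>R axis m 1)))
     = (\<lambda>t. ?g (?z + t *\<^sub>R ((axis m 1, 0, 0) + (\<Sum>s\<in>UNIV. H$s$m *\<^sub>R (0, 0, axis s 1)))))"
    by (rule ext) (simp only: line_eq phiH_line[OF H] grad_phiH_line[OF H])
  then show ?thesis
    unfolding pd_def[of m] dd_def[of "axis m 1"] Bc_def Cc_def
    using DERIV_imp_deriv[OF main] by simp
qed


lemma EL_phiH:
  assumes U: "open U" "a \<in> U" and L: "smooth_on (U \<times> UNIV) L" and H: "symz H"
  shows "EL L (phiH a H) a = dd (0, 1, 0) L (a, 0, 0) - (\<Sum>m\<in>UNIV. Bc L a m + (\<Sum>s\<in>UNIV. H$s$m * Cc L a m s))"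
  unfolding EL_def phiH_a grad_phiH_a pd_line[OF U L H] by simp

lemma symz_add: "symz A \<Longrightarrow> symz B \<Longrightarrow> symz (A + B)"
  by (simp add: symz_def)
lemma symz_diff: "symz A \<Longrightarrow> symz B \<Longrightarrow> symz (A - B)"
  by (simp add: symz_def)

lemma not_var:
  assumes U: "open U" "U \<noteq> {}" and Hz: "symz Hz" and K: "symz K"
    and E1: "\<And>q u p. E (q, u, p, Hz + K) = 0"
    and E2: "\<And>q u p. E (q, u, p, Hz - K) = 0"
    and E3: "\<And>q u p. E (q, u, p, Hz) \<noteq> 0"
  shows "\<not> first_order_variational U E"
proof
  assume "first_order_variational U E"
  then obtain L f where L: "smooth_on (U \<times> UNIV) L" and fnz: "\<forall>z\<in>U \<times> UNIV. f z \<noteq> 0"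
    and eq: "\<forall>\<phi>. smooth_on U \<phi> \<longrightarrow> (\<forall>q\<in>U. EL L \<phi> q =
                   f (q, \<phi> q, grad \<phi> q, hess \<phi> q) * E (q, \<phi> q, grad \<phi> q, hess \<phi> q))"
    unfolding first_order_variational_def by blast
  obtain a where a: "a \<in> U" using U by blast
  define lin where "lin H = dd (0, 1, 0) L (a, 0, 0) - (\<Sum>m\<in>UNIV. Bc L a m + (\<Sum>s\<in>UNIV. H$s$m * Cc L a m s))" for H
  have key: "lin H = f (a, 0, 0, H) * E (a, 0, 0, H)" if "symz H" for H
  proof -
    have "smooth_on U (phiH a H)" unfolding phiH_def by (rule smooth_Qf)
    then have "EL L (phiH a H) a = f (a, 0, 0, H) * E (a, 0, 0, H)"
      using eq a by (simp add: phiH_a grad_phiH_a hess_phiH[OF that])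
    then show ?thesis using EL_phiH[OF U(1) a L that] by (simp add: lin_def)
  qed
  have "lin (Hz + K) + lin (Hz - K) = 2 * lin Hz"
    by (simp add: lin_def sum.distrib sum_subtractf algebra_simps)
  then have "f (a, 0, 0, Hz) * E (a, 0, 0, Hz) = 0"
    using key[OF symz_add[OF Hz K]] key[OF symz_diff[OF Hz K]] key[OF Hz] E1 E2 by simp
  then show False using E3 fnz a by auto
qed

definition S2 :: "4 \<Rightarrow> 4 \<Rightarrow> real^4^4" where
  "S2 i j = (\<chi> r s. if (r = i \<and> s = j) \<or> (r = j \<and> s = i) then 1 else 0)"

lemma symz_S2: "i \<noteq> j \<Longrightarrow> symz (S2 i j)"
  by (auto simp: symz_def S2_def)



theorem mainTheorem6:
  fixes U :: "(real^4) set"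
  assumes "open U" and "U \<noteq> {}"
  shows "\<not> first_order_variational U heavenly1 \<and>
         \<not> first_order_variational U heavenly2 \<and>
         \<not> first_order_variational U grant_eq \<and>
         \<not> first_order_variational U husain_eq"
proof (intro conjI)
  show "\<not> first_order_variational U heavenly1"
    by (rule not_var[OF assms, where Hz=0 and K="S2 1 3 + S2 2 4"])
       (auto simp: symz_def S2_def heavenly1_def intro!: symz_add symz_S2)
  show "\<not> first_order_variational U heavenly2"
    by (rule not_var[OF assms, where Hz="S2 1 3" and K="S2 1 2"])
       (auto simp: symz_def S2_def heavenly2_def intro!: symz_add symz_S2)
  show "\<not> first_order_variational U grant_eq"
    by (rule not_var[OF assms, where Hz="S2 1 3 + S2 2 4" and K="S2 2 3 + S2 1 4"])
       (auto simp: symz_def S2_def grant_eq_def intro!: symz_add symz_S2)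
  show "\<not> first_order_variational U husain_eq"
    by (rule not_var[OF assms, where Hz="S2 1 3 + S2 2 4" and K="S2 2 3 + S2 1 4"])
       (auto simp: symz_def S2_def husain_eq_def intro!: symz_add symz_S2)
qed

end
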